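(* Let $\zeta=e^{2\pi i/3}$ and for $(x,y,z)\in\mathbb{R}^3$ set $b=x+\zeta y+\zeta^2z$, $c=x+\zeta^2y+\zeta z$. Define $F=(F_1,F_2,F_3):\mathbb{R}^3\to\mathbb{R}^3$ by $F_1(x,y,z)=x+y+z$, $$F_2(x,y,z)=\frac{b^2}{c}+\frac{c^2}{b}=\frac{2(x^3+y^3+z^3)+12xyz-3(x^2y+y^2x+y^2z+z^2y+z^2x+x^2z)}{x^2+y^2+z^2-(xy+yz+zx)},$$ $$F_3(x,y,z)=\frac{1}{i}\Big(\frac{b^2}{c}-\frac{c^2}{b}\Big)=\frac{-3\sqrt{3}(x-y)(y-z)(z-x)}{x^2+y^2+z^2-(xy+yz+zx)},$$ when $(x,y,z)$ is not of the form $(t,t,t)$, and $F_2(t,t,t)=F_3(t,t,t)=0$. Then for all $(x,y,z),(x',y',z')\in\mathbb{R}^3$, $F(x,y,z)=F(x',y',z')$ if and only if $(x',y',z')$ is a cyclic permutation of $(x,y,z)$.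
   Context: A cyclic permutation of $(x,y,z)$ is one of $(x,y,z)$, $(y,z,x)$, $(z,x,y)$. *)

theory Defs
  imports Complex_Main
begin

definition zeta :: complex where
  "zeta = exp (2 * pi * \<i> / 3)"

definition bval :: "real \<Rightarrow> real \<Rightarrow> real \<Rightarrow> complex" where
  "bval x y z = of_real x + zeta * of_real y + zeta^2 * of_real z"

definition cval :: "real \<Rightarrow> real \<Rightarrow> real \<Rightarrow> complex" where
  "cval x y z = of_real x + zeta^2 * of_real y + zeta * of_real z"

text \<open>The map F : R^3 -> R^3. The complex expressions below are real-valued
  (c is the complex conjugate of b), so taking the real part loses nothing.\<close>
definition F :: "real \<times> real \<times> real \<Rightarrow> real \<times> real \<times> real" where
  "F p = (case p of (x, y, z) \<Rightarrow>
     (x + y + z,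
      (if x = y \<and> y = z then 0
       else Re ((bval x y z)^2 / cval x y z + (cval x y z)^2 / bval x y z)),
      (if x = y \<and> y = z then 0
       else Re ((1 / \<i>) * ((bval x y z)^2 / cval x y z - (cval x y z)^2 / bval x y z)))))"

end

theory Submission
  imports Defs
begin

lemma zeta_eq: "zeta = Complex (-1/2) (sqrt 3 / 2)"
proof -
  have "zeta = exp (\<i> * complex_of_real (2*pi/3))"
    unfolding zeta_def by (simp add: field_simps)
  also have "\<dots> = Complex (cos (2*pi/3)) (sin (2*pi/3))"
    by (simp add: exp_eq_polar cis.ctr Complex_eq)
  finally show ?thesis by (simp add: cos_120 sin_120)
qed

lemma s3: "sqrt 3 * sqrt 3 = (3::real)" by simp

lemma zeta2: "zeta^2 = Complex (-1/2) (- sqrt 3 / 2)"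
  by (simp add: zeta_eq power2_eq_square complex_eq_iff s3)

lemma zeta3: "zeta^3 = 1"
  by (simp add: zeta_eq power3_eq_cube complex_eq_iff s3 field_simps)

lemma bval_eq: "bval x y z = Complex (x - y/2 - z/2) (sqrt 3 / 2 * (y - z))"
  unfolding bval_def zeta2 by (simp add: zeta_eq complex_eq_iff algebra_simps)

lemma cval_eq: "cval x y z = cnj (bval x y z)"
  unfolding bval_def cval_def zeta2 by (simp add: zeta_eq complex_eq_iff algebra_simps)

lemma bval_zero: "bval x y z = 0 \<longleftrightarrow> x = y \<and> y = z"
  by (auto simp add: bval_eq complex_eq_iff)

lemma bval_inj:
  assumes "x + y + z = x' + y' + z'" "bval x y z = bval x' y' z'"
  shows "x = x' \<and> y = y' \<and> z = z'"
  using assms by (auto simp add: bval_eq complex_eq_iff)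

lemma bval_rot1: "bval y z x = zeta^2 * bval x y z"
  unfolding bval_eq zeta2 by (simp add: complex_eq_iff algebra_simps s3, simp add: field_simps)

lemma bval_rot2: "bval z x y = zeta * bval x y z"
  unfolding bval_eq by (simp add: zeta_eq complex_eq_iff algebra_simps s3, simp add: field_simps)

definition G :: "real \<times> real \<times> real \<Rightarrow> real \<times> complex" where
  "G p = (case p of (x, y, z) \<Rightarrow> (x + y + z,
     (if bval x y z = 0 then 0 else (bval x y z)^2 / cnj (bval x y z))))"

lemma F_G: "F (x, y, z) = (fst (G (x, y, z)), 2 * Re (snd (G (x, y, z))), 2 * Im (snd (G (x, y, z))))"
proof -
  define b where "b = bval x y z"
  have c: "cval x y z = cnj b" by (simp add: cval_eq b_def)
  have e: "(x = y \<and> y = z) = (b = 0)" by (simp add: bval_zero b_def)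
  have w: "cnj (b^2 / cnj b) = (cnj b)^2 / b" by simp
  have r: "Re (b\<^sup>2 / cnj b + (cnj b)\<^sup>2 / b) = 2 * Re (b^2 / cnj b)"
    using complex_add_cnj[of "b^2 / cnj b"] w by simp
  have i: "Re (1 / \<i> * (b\<^sup>2 / cnj b - (cnj b)\<^sup>2 / b)) = 2 * Im (b^2 / cnj b)"
    using complex_diff_cnj[of "b^2 / cnj b"] w by simp
  show ?thesis unfolding F_def G_def using c e r i
    by (simp add: b_def[symmetric])
qed

lemma cnj_zeta2: "cnj (zeta^2) = zeta"
  unfolding zeta2 by (simp add: zeta_eq complex_eq_iff)

lemma zeta_nz: "zeta \<noteq> 0"
  using zeta3 by auto

lemma G_rot: "G (y, z, x) = G (x, y, z)"
proof -
  define b where "b = bval x y z"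
  have b': "bval y z x = zeta^2 * b" unfolding b_def by (rule bval_rot1)
  have cz: "cnj (zeta^2 * b) = zeta * cnj b" using cnj_zeta2 by (simp only: complex_cnj_mult)
  have key: "(zeta^2 * b)^2 / cnj (zeta^2 * b) = b^2 / cnj b"
  proof (cases "b = 0")
    case False
    have "(zeta^2 * b)^2 = (zeta^3 * zeta) * b^2"
      by (simp add: power2_eq_square power3_eq_cube)
    then have "(zeta^2 * b)^2 / cnj (zeta^2 * b) = (zeta^3 * zeta) * b^2 / (zeta * cnj b)"
      by (simp only: cz)
    also have "\<dots> = b^2 / cnj b" using zeta_nz by (simp add: zeta3)
    finally show ?thesis .
  qed simp
  have nz: "(zeta^2 * b = 0) = (b = 0)" using zeta_nz by simp
  have "G (y, z, x) = (y + z + x, if zeta^2 * b = 0 then 0 else (zeta^2 * b)^2 / cnj (zeta^2 * b))"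
    unfolding G_def prod.case b' ..
  also have "\<dots> = (x + y + z, if b = 0 then 0 else b^2 / cnj b)"
    unfolding nz key by (simp add: algebra_simps)
  also have "\<dots> = G (x, y, z)" unfolding G_def prod.case b_def ..
  finally show ?thesis .
qed

lemma G_inj:
  assumes "G (x, y, z) = G (x', y', z')"
  shows "(x', y', z') = (x, y, z) \<or> (x', y', z') = (y, z, x) \<or> (x', y', z') = (z, x, y)"
proof -
  define b where "b = bval x y z"
  define b' where "b' = bval x' y' z'"
  have s: "x + y + z = x' + y' + z'" using assms by (simp add: G_def)
  have ww: "(if b = 0 then 0 else b^2 / cnj b) = (if b' = 0 then 0 else b'^2 / cnj b')"
    using assms unfolding G_def b_def b'_def prod.case prod.inject by (rule conjunct2)
  show ?thesis
  proof (cases "b = 0")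
    case True
    then have "b' = 0" using ww by (auto split: if_splits)
    then show ?thesis using True s bval_inj[OF s] by (simp add: b_def b'_def)
  next
    case False
    then have nz: "b' \<noteq> 0" using ww by (auto split: if_splits)
    have e: "b^2 * cnj b' = b'^2 * cnj b" using ww False nz
      by (simp add: field_simps)
    have "norm (b^2 * cnj b') = norm (b'^2 * cnj b)" using e by simp
    then have "norm b ^ 2 * norm b' = norm b' ^ 2 * norm b" by (simp add: norm_mult norm_power)
    then have nn: "norm b = norm b'" using False nz by (simp add: power2_eq_square)
    have "b^3 * (b' * cnj b') = b'^3 * (b * cnj b)"
    proof -
      have "b^3 * (b' * cnj b') = (b^2 * cnj b') * b * b'" by (simp add: power3_eq_cube power2_eq_square)
      also have "\<dots> = (b'^2 * cnj b) * b * b'" by (simp add: e)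
      also have "\<dots> = b'^3 * (b * cnj b)" by (simp add: power3_eq_cube power2_eq_square)
      finally show ?thesis .
    qed
    moreover have "b' * cnj b' = b * cnj b"
      using nn by (simp flip: complex_norm_square)
    moreover have "b * cnj b \<noteq> 0" using False by simp
    ultimately have c3: "b^3 = b'^3" by simp
    define t where "t = b / b'"
    have t3: "t^3 = 1" using c3 nz by (simp add: t_def power_divide)
    have z1: "1 + zeta + zeta^2 = 0" unfolding zeta2 by (simp add: zeta_eq complex_eq_iff)
    have "(t - 1) * (t - zeta) * (t - zeta^2) = t^3 - 1 - (1 + zeta + zeta^2) * t^2
          + zeta * (1 + zeta + zeta^2) * t - (zeta^3 - 1)"
      by (simp add: algebra_simps power2_eq_square power3_eq_cube)
    then have "(t - 1) * (t - zeta) * (t - zeta^2) = 0" using t3 z1 zeta3 by simp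
    then have "t = 1 \<or> t = zeta \<or> t = zeta^2" by auto
    then have "b' = b \<or> b' = zeta^2 * b \<or> b' = zeta * b"
    proof (elim disjE)
      assume "t = 1" then show ?thesis using nz by (simp add: t_def)
    next
      assume "t = zeta" then have "b = zeta * b'" using nz by (simp add: t_def field_simps)
      then have "zeta^2 * b = zeta^3 * b'" by (simp add: power2_eq_square power3_eq_cube)
      then show ?thesis using zeta3 by simp
    next
      assume "t = zeta^2" then have "b = zeta^2 * b'" using nz by (simp add: t_def field_simps)
      then have "zeta * b = zeta^3 * b'" by (simp add: power2_eq_square power3_eq_cube)
      then show ?thesis using zeta3 by simp
    qed
    then show ?thesis
    proof (elim disjE)
      assume "b' = b" then show ?thesis using bval_inj[of x' y' z' x y z] s by (simp add: b_def b'_def)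
    next
      assume "b' = zeta^2 * b" then have "bval x' y' z' = bval y z x"
        using bval_rot1[where x=x and y=y and z=z] unfolding b_def b'_def by metis
      then show ?thesis using bval_inj[of x' y' z' y z x] s by simp
    next
      assume "b' = zeta * b" then have "bval x' y' z' = bval z x y"
        using bval_rot2[where x=x and y=y and z=z] unfolding b_def b'_def by metis
      then show ?thesis using bval_inj[of x' y' z' z x y] s by simp
    qed
  qed
qed

theorem lemma3:
  fixes x y z x' y' z' :: real
  shows "F (x, y, z) = F (x', y', z') \<longleftrightarrow>
         ((x', y', z') = (x, y, z) \<or> (x', y', z') = (y, z, x) \<or> (x', y', z') = (z, x, y))"
proof
  assume "F (x, y, z) = F (x', y', z')"
  then have "G (x, y, z) = G (x', y', z')"
    unfolding F_G by (simp add: prod_eq_iff complex_eq_iff)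
  then show "(x', y', z') = (x, y, z) \<or> (x', y', z') = (y, z, x) \<or> (x', y', z') = (z, x, y)"
    by (rule G_inj)
next
  assume "(x', y', z') = (x, y, z) \<or> (x', y', z') = (y, z, x) \<or> (x', y', z') = (z, x, y)"
  then have "G (x', y', z') = G (x, y, z)"
  proof (elim disjE)
    assume "(x', y', z') = (x, y, z)" then show ?thesis by simp
  next
    assume "(x', y', z') = (y, z, x)" then show ?thesis using G_rot[where x=x and y=y and z=z] by simp
  next
    assume "(x', y', z') = (z, x, y)" then show ?thesis
      using G_rot[where x=z and y=x and z=y] G_rot[where x=x and y=y and z=z] by simp
  qed
  then show "F (x, y, z) = F (x', y', z')" unfolding F_G by simp
qed

end
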